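(* Let $q$ be a prime power and let $\{P_i\}$ be an infinite family of toric codes over $\mathbb{F}_q$, with $P_i\subseteq[0,q-2]^{n_i}$. If the sequence $\{M(P_i)\}$ is unbounded, then $\delta(P_i)\to0$ as $i\to\infty$.
   Context: For an integral convex polytope $P\subseteq[0,q-2]^n$: $\mathcal{L}_P=\mathrm{span}_{\mathbb{F}_q}\{x^p: p\in P\cap\mathbb{Z}^n\}$, $N(P)=\max_{0\neq f\in\mathcal{L}_P}|Z(f)|$ with $Z(f)$ the zero set of $f$ in $(\mathbb{F}_q^\times)^n$, $\delta(P)=\big((q-1)^n-N(P)\big)/(q-1)^n$, and $R(P)=|P\cap\mathbb{Z}^n|/(q-1)^n$. A sequence of nonempty integral convex polytopes $P_i\subseteq[0,q-2]^{n_i}$ is an infinite family of toric codes if $n_i\to\infty$ and $\delta(P_i)\to\delta$, $R(P_i)\to R$ for some $\delta,R\in[0,1]$. $M(P)$ denotes the largest integer $i\ge0$ such that there is a unimodular affine transformation $A$ (a map $x\mapsto Mx+\lambda$ with $M\in GL(n,\mathbb{Z})$, $\lambda\in\mathbb{Z}^n$) with $A([0,1]^i\times\{0\}^{n-i})\subseteq P$. *)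

theory Defs
  imports "HOL-Analysis.Analysis"
begin

text \<open>Points of R^n are represented as functions nat => real that vanish at
coordinates j >= n; lattice points of Z^n as functions nat => int vanishing
at j >= n.  The field F_q is a finite field type 'a, q = CARD('a).\<close>

definition conv_hull_fin :: "(nat \<Rightarrow> real) set \<Rightarrow> (nat \<Rightarrow> real) set" where
  "conv_hull_fin V = {x. \<exists>u. (\<forall>v\<in>V. 0 \<le> u v) \<and> (\<Sum>v\<in>V. u v) = 1 \<and>
                          (\<forall>j. x j = (\<Sum>v\<in>V. u v * v j))}"

definition integral_polytope :: "nat \<Rightarrow> (nat \<Rightarrow> real) set \<Rightarrow> bool" where
  "integral_polytope n P \<longleftrightarrow> (\<exists>V. finite V \<and> V \<noteq> {} \<and>
     (\<forall>v\<in>V. (\<forall>j. v j \<in> \<int>) \<and> (\<forall>j\<ge>n. v j = 0)) \<and> P = conv_hull_fin V)"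

definition in_box :: "nat \<Rightarrow> nat \<Rightarrow> (nat \<Rightarrow> real) set \<Rightarrow> bool" where
  "in_box q n P \<longleftrightarrow> (\<forall>x\<in>P. (\<forall>j<n. 0 \<le> x j \<and> x j \<le> real q - 2) \<and> (\<forall>j\<ge>n. x j = 0))"

definition lattice_pts :: "(nat \<Rightarrow> real) set \<Rightarrow> (nat \<Rightarrow> int) set" where
  "lattice_pts P = {p. (\<lambda>j. real_of_int (p j)) \<in> P}"

definition eval_toric :: "nat \<Rightarrow> (nat \<Rightarrow> real) set \<Rightarrow> ((nat \<Rightarrow> int) \<Rightarrow> 'a::field) \<Rightarrow> (nat \<Rightarrow> 'a) \<Rightarrow> 'a" where
  "eval_toric n P c x = (\<Sum>p\<in>lattice_pts P. c p * (\<Prod>j<n. x j ^ nat (p j)))"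

definition zero_set :: "nat \<Rightarrow> (nat \<Rightarrow> real) set \<Rightarrow> ((nat \<Rightarrow> int) \<Rightarrow> 'a::{finite,field}) \<Rightarrow> (nat \<Rightarrow> 'a) set" where
  "zero_set n P c = {x. (\<forall>j<n. x j \<noteq> 0) \<and> (\<forall>j\<ge>n. x j = 0) \<and> eval_toric n P c x = 0}"

definition N_toric :: "'a::{finite,field} itself \<Rightarrow> nat \<Rightarrow> (nat \<Rightarrow> real) set \<Rightarrow> nat" where
  "N_toric T n P = Max {card (zero_set n P c) | c :: (nat \<Rightarrow> int) \<Rightarrow> 'a.
      (\<forall>p. p \<notin> lattice_pts P \<longrightarrow> c p = 0) \<and> (\<exists>p\<in>lattice_pts P. c p \<noteq> 0)}"

definition delta_toric :: "'a::{finite,field} itself \<Rightarrow> nat \<Rightarrow> (nat \<Rightarrow> real) set \<Rightarrow> real" where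
  "delta_toric T n P = (real ((CARD('a) - 1) ^ n) - real (N_toric T n P)) / real ((CARD('a) - 1) ^ n)"

definition rate_toric :: "'a::{finite,field} itself \<Rightarrow> nat \<Rightarrow> (nat \<Rightarrow> real) set \<Rightarrow> real" where
  "rate_toric T n P = real (card (lattice_pts P)) / real ((CARD('a) - 1) ^ n)"

definition unimodular :: "nat \<Rightarrow> (nat \<Rightarrow> nat \<Rightarrow> int) \<Rightarrow> bool" where
  "unimodular n A \<longleftrightarrow> (\<exists>B. \<forall>j<n. \<forall>l<n.
      (\<Sum>m<n. A j m * B m l) = (if j = l then 1 else 0) \<and>
      (\<Sum>m<n. B j m * A m l) = (if j = l then 1 else 0))"

definition cube_embeds :: "nat \<Rightarrow> (nat \<Rightarrow> real) set \<Rightarrow> nat \<Rightarrow> bool" where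
  "cube_embeds n P k \<longleftrightarrow> (\<exists>A lam. unimodular n A \<and> (\<forall>j\<ge>n. lam j = (0::int)) \<and>
     (\<forall>y::nat \<Rightarrow> real. (\<forall>j<k. 0 \<le> y j \<and> y j \<le> 1) \<and> (\<forall>j\<ge>k. y j = 0) \<longrightarrow>
        (\<lambda>j. if j < n then (\<Sum>l<n. real_of_int (A j l) * y l) + real_of_int (lam j) else 0) \<in> P))"

definition M_toric :: "nat \<Rightarrow> (nat \<Rightarrow> real) set \<Rightarrow> nat" where
  "M_toric n P = Max {k. k \<le> n \<and> cube_embeds n P k}"

end

theory Submission
  imports Defs
begin

lemma powi_sum: fixes x :: "'a::field" assumes "x \<noteq> 0"
  shows "x powi (\<Sum>i\<in>S. e i) = (\<Prod>i\<in>S. x powi e i)"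
proof (induction S rule: infinite_finite_induct)
  case (insert a F) then show ?case using assms by (simp add: power_int_add)
qed auto

lemma prod_powi: fixes f :: "_ \<Rightarrow> 'a::field"
  shows "(\<Prod>i\<in>S. f i) powi e = (\<Prod>i\<in>S. f i powi e)"
proof (induction S rule: infinite_finite_induct)
  case (insert a F) then show ?case by (simp add: power_int_mult_distrib)
qed auto

lemma box_finite: fixes S :: "nat \<Rightarrow> 'b::zero set"
  assumes "\<And>j. j < n \<Longrightarrow> finite (S j)"
  shows "finite {x. (\<forall>j<n. x j \<in> S j) \<and> (\<forall>j\<ge>n. x j = 0)}"
    and "card {x. (\<forall>j<n. x j \<in> S j) \<and> (\<forall>j\<ge>n. x j = 0)} = (\<Prod>j<n. card (S j))"
proof -
  let ?X = "{x. (\<forall>j<n. x j \<in> S j) \<and> (\<forall>j\<ge>n. x j = 0)}"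
  have bij: "bij_betw (\<lambda>x. restrict x {..<n}) ?X (PiE {..<n} S)"
  proof (rule bij_betwI[where g="\<lambda>f j. if j < n then f j else 0"])
    show "(\<lambda>x. restrict x {..<n}) \<in> ?X \<rightarrow> PiE {..<n} S" by auto
    show "(\<lambda>f j. if j < n then f j else 0) \<in> PiE {..<n} S \<rightarrow> ?X" by (auto simp: PiE_def Pi_def)
    show "\<And>x. x \<in> ?X \<Longrightarrow> (\<lambda>j. if j < n then restrict x {..<n} j else 0) = x"
      by (auto simp: fun_eq_iff)
    show "\<And>y. y \<in> PiE {..<n} S \<Longrightarrow> restrict (\<lambda>j. if j < n then y j else 0) {..<n} = y"
      by (auto simp: fun_eq_iff PiE_def extensional_def)
  qed
  have fin: "finite (PiE {..<n} S)" using assms by (intro finite_PiE) auto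
  show "finite ?X" using bij_betw_finite[OF bij] fin by simp
  show "card ?X = (\<Prod>j<n. card (S j))" using bij_betw_same_card[OF bij] card_PiE[of "{..<n}" S] by simp
qed

lemma key:
  fixes T :: "'a::{finite,field} itself"
  assumes box: "in_box CARD('a) n P" and ce: "cube_embeds n P k" and kn: "k \<le> n"
  shows "delta_toric T n P \<le> (real (CARD('a) - 2) / real (CARD('a) - 1)) ^ k"
proof -
  define q where "q = CARD('a)"
  obtain A lam where uni: "unimodular n A" and lam0: "\<forall>j\<ge>n. lam j = (0::int)" and
    emb: "\<And>y::nat \<Rightarrow> real. (\<forall>j<k. 0 \<le> y j \<and> y j \<le> 1) \<and> (\<forall>j\<ge>k. y j = 0) \<Longrightarrow>
        (\<lambda>j. if j < n then (\<Sum>l<n. real_of_int (A j l) * y l) + real_of_int (lam j) else 0) \<in> P"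
    using ce unfolding cube_embeds_def by blast
  obtain B where AB: "\<And>j l. j<n \<Longrightarrow> l<n \<Longrightarrow> (\<Sum>m<n. A j m * B m l) = (if j = l then 1 else 0)"
    and BA: "\<And>j l. j<n \<Longrightarrow> l<n \<Longrightarrow> (\<Sum>m<n. B j m * A m l) = (if j = l then 1 else 0)"
    using uni unfolding unimodular_def by blast
  have hb1: "\<And>x j. x \<in> P \<Longrightarrow> j < n \<Longrightarrow> 0 \<le> x j \<and> x j \<le> real q - 2"
    using box unfolding in_box_def q_def by blast
  have hb2: "\<And>x j. x \<in> P \<Longrightarrow> n \<le> j \<Longrightarrow> x j = 0"
    using box unfolding in_box_def by blast
  define pS :: "nat set \<Rightarrow> nat \<Rightarrow> int" where "pS S = (\<lambda>j. if j<n then lam j + (\<Sum>m\<in>S. A j m) else 0)" for S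
  define K where "K = {..<k}"
  have KPn: "S \<subseteq> {..<n}" if "S \<in> Pow K" for S using that kn by (auto simp: K_def)
  have pS_in: "pS S \<in> lattice_pts P" if S: "S \<in> Pow K" for S
  proof -
    define y where "y = (\<lambda>l. if l \<in> S then 1 else (0::real))"
    have m1: "(\<lambda>j. if j < n then (\<Sum>l<n. real_of_int (A j l) * y l) + real_of_int (lam j) else 0) \<in> P"
      by (rule emb) (use S in \<open>auto simp: y_def K_def\<close>)
    have m2: "(\<Sum>l<n. real_of_int (A j l) * y l) = (\<Sum>l\<in>S. real_of_int (A j l))" for j
    proof -
      have "(\<Sum>l<n. real_of_int (A j l) * y l) = (\<Sum>l\<in>{..<n} \<inter> S. real_of_int (A j l))"
        unfolding y_def by (simp add: sum.inter_restrict[symmetric] if_distrib cong: if_cong)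
      also have "{..<n} \<inter> S = S" using KPn[OF S] by auto
      finally show ?thesis .
    qed
    have "(\<lambda>j. if j < n then (\<Sum>l\<in>S. real_of_int (A j l)) + real_of_int (lam j) else 0) \<in> P" using m1 by (simp only: m2)
    moreover have "(\<lambda>j. if j < n then (\<Sum>l\<in>S. real_of_int (A j l)) + real_of_int (lam j) else 0) = (\<lambda>j. real_of_int (pS S j))"
      by (auto simp: pS_def fun_eq_iff)
    ultimately show ?thesis unfolding lattice_pts_def by simp
  qed
  have latt: "(\<forall>j<n. 0 \<le> p j \<and> p j \<le> int q) \<and> (\<forall>j\<ge>n. p j = 0)" if "p \<in> lattice_pts P" for p
  proof -
    have "(\<lambda>j. real_of_int (p j)) \<in> P" using that by (simp add: lattice_pts_def)
    then have h1: "\<forall>j<n. 0 \<le> real_of_int (p j) \<and> real_of_int (p j) \<le> real q - 2"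
      and h2: "\<forall>j\<ge>n. real_of_int (p j) = 0" using hb1 hb2 by blast+
    have "0 \<le> p j \<and> p j \<le> int q" if "j < n" for j
    proof -
      have "0 \<le> real_of_int (p j)" "real_of_int (p j) \<le> real_of_int (int q)" using h1 that by auto
      then show ?thesis by linarith
    qed
    moreover have "p j = 0" if "j \<ge> n" for j using h2 that by simp
    ultimately show ?thesis by blast
  qed
  have latt_fin: "finite (lattice_pts P)"
  proof (rule finite_subset)
    show "lattice_pts P \<subseteq> {x. (\<forall>j<n. x j \<in> {0..int q}) \<and> (\<forall>j\<ge>n. x j = 0)}" using latt by auto
    show "finite {x. (\<forall>j<n. x j \<in> {0..int q}) \<and> (\<forall>j\<ge>n. x j = (0::int))}" by (rule box_finite) auto
  qed
  have pS_diff: "(\<Sum>j<n. B m j * (pS S j - lam j)) = (if m \<in> S then 1 else 0)" if S: "S \<in> Pow K" and m: "m < n" for S m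
  proof -
    have "(\<Sum>j<n. B m j * (pS S j - lam j)) = (\<Sum>j<n. B m j * (\<Sum>l\<in>S. A j l))" by (simp add: pS_def)
    also have "\<dots> = (\<Sum>l\<in>S. \<Sum>j<n. B m j * A j l)" by (simp add: sum_distrib_left sum.swap[of _ S])
    also have "\<dots> = (\<Sum>l\<in>S. if m = l then 1 else 0)" using KPn[OF S] m by (intro sum.cong) (auto simp: BA)
    also have "\<dots> = (if m \<in> S then 1 else 0)" using finite_subset[OF KPn[OF S]] by (simp add: sum.delta')
    finally show ?thesis .
  qed
  have pS_inj: "inj_on pS (Pow K)"
  proof (rule inj_onI)
    fix S S' assume S: "S \<in> Pow K" and S': "S' \<in> Pow K" and eq: "pS S = pS S'"
    have "m \<in> S \<longleftrightarrow> m \<in> S'" if "m < n" for m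
      using pS_diff[OF S that] pS_diff[OF S' that] eq by (auto split: if_splits)
    then show "S = S'" using KPn[OF S] KPn[OF S'] by blast
  qed
  define c :: "(nat \<Rightarrow> int) \<Rightarrow> 'a" where
    "c p = (if p \<in> pS ` Pow K then (-1) ^ (k - card (the_inv_into (Pow K) pS p)) else 0)" for p
  have c_pS: "c (pS S) = (-1) ^ (k - card S)" if "S \<in> Pow K" for S
    using that pS_inj by (simp add: c_def the_inv_into_f_f)
  have img_sub: "pS ` Pow K \<subseteq> lattice_pts P" using pS_in by auto
  have c_out: "c p = 0" if "p \<notin> lattice_pts P" for p using that img_sub by (auto simp: c_def)
  have c_nz: "\<exists>p\<in>lattice_pts P. c p \<noteq> 0"
    using pS_in[of "{}"] c_pS[of "{}"] by (intro bexI[of _ "pS {}"]) auto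
  define tor :: "(nat \<Rightarrow> 'a) set" where "tor = {x. (\<forall>j<n. x j \<in> -{0}) \<and> (\<forall>j\<ge>n. x j = 0)}"
  define \<phi> :: "(nat \<Rightarrow> 'a) \<Rightarrow> nat \<Rightarrow> 'a" where "\<phi> x m = (\<Prod>j<n. x j powi A j m)" for x m
  define X :: "(nat \<Rightarrow> 'a) \<Rightarrow> 'a" where "X x = (\<Prod>j<n. x j powi lam j)" for x
  have finK: "finite K" by (simp add: K_def)
  have mon: "(\<Prod>j<n. x j ^ nat (pS S j)) = X x * (\<Prod>m\<in>S. \<phi> x m)" if x: "x \<in> tor" and S: "S \<in> Pow K" for x S
  proof -
    have "(\<Prod>j<n. x j ^ nat (pS S j)) = (\<Prod>j<n. x j powi lam j * (\<Prod>m\<in>S. x j powi A j m))"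
    proof (rule prod.cong[OF refl])
      fix j assume j: "j \<in> {..<n}"
      have xj: "x j \<noteq> 0" using x j by (auto simp: tor_def)
      have nn: "0 \<le> pS S j" using latt[OF pS_in[OF S]] j by auto
      have "x j ^ nat (pS S j) = x j powi (int (nat (pS S j)))" by (rule power_int_of_nat[symmetric])
      also have "\<dots> = x j powi (lam j + (\<Sum>m\<in>S. A j m))" using nn j by (simp add: pS_def)
      also have "\<dots> = x j powi lam j * (\<Prod>m\<in>S. x j powi A j m)" using xj by (simp add: power_int_add powi_sum)
      finally show "x j ^ nat (pS S j) = x j powi lam j * (\<Prod>m\<in>S. x j powi A j m)" .
    qed
    also have "\<dots> = X x * (\<Prod>m\<in>S. \<phi> x m)"
      by (simp add: prod.distrib X_def \<phi>_def prod.swap[of _ S])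
    finally show ?thesis .
  qed
  have eval: "eval_toric n P c x = X x * (\<Prod>m\<in>K. \<phi> x m - 1)" if x: "x \<in> tor" for x
  proof -
    have "eval_toric n P c x = (\<Sum>p\<in>lattice_pts P. c p * (\<Prod>j<n. x j ^ nat (p j)))" by (simp add: eval_toric_def)
    also have "\<dots> = (\<Sum>p\<in>pS ` Pow K. c p * (\<Prod>j<n. x j ^ nat (p j)))"
      by (rule sum.mono_neutral_right[OF latt_fin img_sub]) (auto simp: c_def)
    also have "\<dots> = (\<Sum>S\<in>Pow K. c (pS S) * (\<Prod>j<n. x j ^ nat (pS S j)))"
      by (simp add: sum.reindex[OF pS_inj])
    also have "\<dots> = (\<Sum>S\<in>Pow K. X x * ((\<Prod>m\<in>S. \<phi> x m) * (\<Prod>m\<in>K - S. - 1)))"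
    proof (rule sum.cong[OF refl])
      fix S assume S: "S \<in> Pow K"
      have "card (K - S) = k - card S" using S finK by (subst card_Diff_subset) (auto simp: K_def intro: finite_subset)
      then show "c (pS S) * (\<Prod>j<n. x j ^ nat (pS S j)) = X x * ((\<Prod>m\<in>S. \<phi> x m) * (\<Prod>m\<in>K - S. - 1))"
        using S by (simp add: c_pS mon[OF x S])
    qed
    also have "\<dots> = X x * (\<Prod>m\<in>K. \<phi> x m + - 1)"
      using prod_add[OF finK, of "\<phi> x" "\<lambda>_. -1"] by (simp add: sum_distrib_left)
    finally show ?thesis by simp
  qed
  have q2: "2 \<le> q"
  proof -
    have "card {0::'a, 1} = 2" by simp
    moreover have "card {0::'a, 1} \<le> q" unfolding q_def by (rule card_mono) auto
    ultimately show ?thesis by simp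
  qed
  have xinv: "(\<Prod>m<n. \<phi> x m powi B m l) = x l" if x: "x \<in> tor" and l: "l < n" for x l
  proof -
    have xnz: "x j \<noteq> 0" if "j < n" for j using x that by (auto simp: tor_def)
    have "(\<Prod>m<n. \<phi> x m powi B m l) = (\<Prod>m<n. \<Prod>j<n. x j powi (A j m * B m l))"
      by (simp add: \<phi>_def prod_powi power_int_mult)
    also have "\<dots> = (\<Prod>j<n. \<Prod>m<n. x j powi (A j m * B m l))" by (rule prod.swap)
    also have "\<dots> = (\<Prod>j<n. x j powi (\<Sum>m<n. A j m * B m l))" by (simp add: powi_sum xnz)
    also have "\<dots> = (\<Prod>j<n. if j = l then x j else 1)" using l by (intro prod.cong) (auto simp: AB)
    also have "\<dots> = x l" using l by (simp add: prod.delta)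
    finally show ?thesis .
  qed
  define \<Phi> where "\<Phi> x = (\<lambda>m. if m < n then \<phi> x m else 0)" for x
  have Phi_inj: "inj_on \<Phi> tor"
  proof (rule inj_onI)
    fix x x' assume x: "x \<in> tor" and x': "x' \<in> tor" and eq: "\<Phi> x = \<Phi> x'"
    have "\<phi> x m = \<phi> x' m" if "m < n" for m using eq that by (simp add: \<Phi>_def fun_eq_iff) metis
    then have "x l = x' l" if "l < n" for l using xinv[OF x that] xinv[OF x' that] by simp
    moreover have "x l = x' l" if "l \<ge> n" for l using x x' that by (simp add: tor_def)
    ultimately show "x = x'" by (metis not_le ext)
  qed
  define Z where "Z = zero_set n P c"
  have Z_tor: "Z \<subseteq> tor" by (auto simp: Z_def zero_set_def tor_def)
  have fin_tor: "finite tor" unfolding tor_def by (rule box_finite) auto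
  have card_tor: "card tor = (q - 1) ^ n"
  proof -
    have "card tor = (\<Prod>j<n. card (-{0::'a}))" unfolding tor_def by (rule box_finite) auto
    also have "card (-{0::'a}) = q - 1"
      by (simp add: Compl_eq_Diff_UNIV card_Diff_subset q_def)
    finally show ?thesis by simp
  qed
  define T2 :: "(nat \<Rightarrow> 'a) set" where
    "T2 = {y. (\<forall>j<n. y j \<in> (if j < k then -{0,1} else -{0})) \<and> (\<forall>j\<ge>n. y j = 0)}"
  have fin_T2: "finite T2" unfolding T2_def by (rule box_finite) auto
  have card_T2: "card T2 = (q - 2) ^ k * (q - 1) ^ (n - k)"
  proof -
    have c1: "card (-{0::'a}) = q - 1"
      by (simp add: Compl_eq_Diff_UNIV card_Diff_subset q_def)
    have c2: "card (-{0::'a,1}) = q - 2"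
      by (simp add: Compl_eq_Diff_UNIV card_Diff_subset q_def)
    have "card T2 = (\<Prod>j<n. card (if j < k then -{0::'a,1} else -{0}))" unfolding T2_def by (rule box_finite) auto
    also have "\<dots> = (\<Prod>j<n. if j < k then q - 2 else q - 1)" by (intro prod.cong) (auto simp: c1 c2)
    also have "{..<n} = {..<k} \<union> {k..<n}" using kn by auto
    also have "(\<Prod>j\<in>{..<k} \<union> {k..<n}. if j < k then q - 2 else q - 1) =
        (\<Prod>j\<in>{..<k}. if j < k then q - 2 else q - 1) * (\<Prod>j\<in>{k..<n}. if j < k then q - 2 else q - 1)"
      by (rule prod.union_disjoint) auto
    also have "(\<Prod>j\<in>{..<k}. if j < k then q - 2 else q - 1) = (q - 2) ^ k" by simp
    also have "(\<Prod>j\<in>{k..<n}. if j < k then q - 2 else q - 1) = (q - 1) ^ (n - k)" by simp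
    finally show ?thesis .
  qed
  have Phi_into: "\<Phi> ` (tor - Z) \<subseteq> T2"
  proof
    fix y assume "y \<in> \<Phi> ` (tor - Z)"
    then obtain x where x: "x \<in> tor" "x \<notin> Z" and y: "y = \<Phi> x" by auto
    have xnz: "x j \<noteq> 0" if "j < n" for j using x that by (auto simp: tor_def)
    have ev: "eval_toric n P c x \<noteq> 0" using x by (auto simp: Z_def zero_set_def tor_def)
    have ne1: "\<phi> x m \<noteq> 1" if "m < k" for m
    proof
      assume "\<phi> x m = 1"
      then have "(\<Prod>m\<in>K. \<phi> x m - 1) = 0" using that finK by (intro prod_zero) (auto simp: K_def)
      then show False using ev eval[OF x(1)] by simp
    qed
    have ne0: "\<phi> x m \<noteq> 0" for m using xnz by (simp add: \<phi>_def)
    show "y \<in> T2" using ne1 ne0 by (auto simp: y \<Phi>_def T2_def)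
  qed
  have card_NZ: "card (tor - Z) \<le> (q - 2) ^ k * (q - 1) ^ (n - k)"
  proof -
    have "card (tor - Z) = card (\<Phi> ` (tor - Z))"
      by (rule card_image[symmetric]) (rule inj_on_subset[OF Phi_inj], auto)
    also have "\<dots> \<le> card T2" by (rule card_mono[OF fin_T2 Phi_into])
    finally show ?thesis using card_T2 by simp
  qed
  have card_Z: "card Z = card tor - card (tor - Z)"
    using card_Diff_subset[OF finite_subset[OF Z_tor fin_tor] Z_tor] card_mono[OF fin_tor Z_tor] by simp
  have N_ge: "card Z \<le> N_toric T n P"
  proof -
    let ?S = "{card (zero_set n P c) | c :: (nat \<Rightarrow> int) \<Rightarrow> 'a.
      (\<forall>p. p \<notin> lattice_pts P \<longrightarrow> c p = 0) \<and> (\<exists>p\<in>lattice_pts P. c p \<noteq> 0)}"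
    have "?S \<subseteq> {..card tor}"
    proof
      fix v assume "v \<in> ?S"
      then obtain c' :: "(nat \<Rightarrow> int) \<Rightarrow> 'a" where "v = card (zero_set n P c')" by auto
      moreover have "zero_set n P c' \<subseteq> tor" by (auto simp: zero_set_def tor_def)
      ultimately show "v \<in> {..card tor}" using card_mono[OF fin_tor] by auto
    qed
    then have "finite ?S" by (rule finite_subset) simp
    moreover have "card Z \<in> ?S" unfolding Z_def using c_out c_nz by blast
    ultimately show ?thesis unfolding N_toric_def by (rule Max_ge)
  qed
  have NZ_le: "card (tor - Z) \<le> card tor" by (rule card_mono[OF fin_tor]) auto
  define b where "b = (q - 2) ^ k * (q - 1) ^ (n - k)"
  have Qpos: "(0::real) < real ((q - 1) ^ n)" using q2 by simp
  have "delta_toric T n P = (real ((q - 1) ^ n) - real (N_toric T n P)) / real ((q - 1) ^ n)"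
    by (simp add: delta_toric_def q_def)
  also have "\<dots> \<le> real b / real ((q - 1) ^ n)"
  proof (rule divide_right_mono)
    have "real (card Z) = real (card tor) - real (card (tor - Z))" using card_Z NZ_le by simp
    moreover have "real (card Z) \<le> real (N_toric T n P)" using N_ge by (simp only: of_nat_le_iff)
    moreover have "real (card (tor - Z)) \<le> real b" using card_NZ unfolding b_def by (simp only: of_nat_le_iff)
    moreover have "real (card tor) = real ((q - 1) ^ n)" using card_tor by (simp only:)
    ultimately show "real ((q - 1) ^ n) - real (N_toric T n P) \<le> real b" by linarith
  qed simp
  also have "\<dots> = (real (q - 2) / real (q - 1)) ^ k"
  proof -
    have "(q - 1) ^ n = (q - 1) ^ k * (q - 1) ^ (n - k)" using kn by (simp add: power_add[symmetric])
    moreover have "real (q - 1) ^ (n - k) \<noteq> 0" using q2 by simp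
    ultimately show ?thesis unfolding b_def by (simp add: power_divide)
  qed
  finally show ?thesis unfolding q_def .
qed

lemma cube0:
  assumes "integral_polytope n P"
  shows "cube_embeds n P 0"
proof -
  obtain V where fin: "finite V" and ne: "V \<noteq> {}" and
    Vint: "\<forall>v\<in>V. (\<forall>j. v j \<in> \<int>) \<and> (\<forall>j\<ge>n. v j = 0)" and PV: "P = conv_hull_fin V"
    using assms unfolding integral_polytope_def by blast
  obtain v where v: "v \<in> V" using ne by blast
  define A :: "nat \<Rightarrow> nat \<Rightarrow> int" where "A = (\<lambda>j l. if j = l then 1 else 0)"
  define lam :: "nat \<Rightarrow> int" where "lam = (\<lambda>j. if j < n then \<lfloor>v j\<rfloor> else 0)"
  have AA: "(\<Sum>m<n. A j m * A m l) = (if j = l then 1 else 0)" if "j < n" for j l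
  proof -
    have "(\<Sum>m<n. A j m * A m l) = (\<Sum>m<n. if j = m then A m l else 0)" by (intro sum.cong) (auto simp: A_def)
    also have "\<dots> = A j l" using that by (simp add: sum.delta)
    finally show ?thesis by (simp add: A_def)
  qed
  have uni: "unimodular n A"
    unfolding unimodular_def by (rule exI[of _ A]) (simp add: AA)
  have s1: "(\<Sum>w\<in>V. (if w = v then 1 else 0) * w j) = v j" for j :: nat
  proof -
    have "(\<Sum>w\<in>V. (if w = v then 1 else 0) * w j) = (\<Sum>w\<in>V. if w = v then v j else (0::real))"
      by (intro sum.cong) auto
    also have "\<dots> = v j" using fin v by (simp add: sum.delta)
    finally show ?thesis .
  qed
  have s2: "(\<Sum>w\<in>V. (if w = v then 1 else 0::real)) = 1" using fin v by (simp add: sum.delta)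
  have vP: "v \<in> P"
    unfolding PV conv_hull_fin_def
    by (rule CollectI, rule exI[of _ "\<lambda>w. if w = v then 1 else 0"]) (simp add: s1 s2)
  have veq: "(\<lambda>j. if j < n then (\<Sum>l<n. real_of_int (A j l) * y l) + real_of_int (lam j) else 0) = v"
    if "\<forall>j\<ge>0. y j = 0" for y :: "nat \<Rightarrow> real"
  proof
    fix j
    show "(if j < n then (\<Sum>l<n. real_of_int (A j l) * y l) + real_of_int (lam j) else 0) = v j"
      using that Vint v by (auto simp: lam_def of_int_floor)
  qed
  show ?thesis unfolding cube_embeds_def
    by (rule exI[of _ A], rule exI[of _ lam]) (use uni veq vP in \<open>auto simp: lam_def\<close>)
qed

theorem mainTheorem12:
  fixes T :: "'a::{finite,field} itself"
    and n :: "nat \<Rightarrow> nat"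
    and P :: "nat \<Rightarrow> (nat \<Rightarrow> real) set"
    and \<delta> R :: real
  assumes poly: "\<And>i. integral_polytope (n i) (P i)"
    and box: "\<And>i. in_box CARD('a) (n i) (P i)"
    and n_inf: "filterlim n at_top sequentially"
    and delta_range: "\<delta> \<in> {0..1}" and R_range: "R \<in> {0..1}"
    and delta_lim: "(\<lambda>i. delta_toric T (n i) (P i)) \<longlonglongrightarrow> \<delta>"
    and rate_lim: "(\<lambda>i. rate_toric T (n i) (P i)) \<longlonglongrightarrow> R"
    and M_unbdd: "\<not> bdd_above (range (\<lambda>i. M_toric (n i) (P i)))"
  shows "(\<lambda>i. delta_toric T (n i) (P i)) \<longlonglongrightarrow> 0"
proof -
  define q where "q = CARD('a)"
  define r where "r = real (q - 2) / real (q - 1)"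
  define M where "M i = M_toric (n i) (P i)" for i
  define d where "d i = delta_toric T (n i) (P i)" for i
  have q2: "2 \<le> q"
  proof -
    have "card {0::'a, 1} = 2" by simp
    moreover have "card {0::'a, 1} \<le> q" unfolding q_def by (rule card_mono) auto
    ultimately show ?thesis by simp
  qed
  have r0: "0 \<le> r" by (simp add: r_def)
  have r1: "r < 1" using q2 by (simp add: r_def of_nat_diff)
  have dM: "d i \<le> r ^ M i" for i
  proof -
    let ?S = "{k. k \<le> n i \<and> cube_embeds (n i) (P i) k}"
    have "finite ?S" by (rule finite_subset[of _ "{..n i}"]) auto
    moreover have "0 \<in> ?S" using cube0[OF poly] by simp
    ultimately have "Max ?S \<in> ?S" by (intro Max_in) auto
    then have "M i \<le> n i" "cube_embeds (n i) (P i) (M i)" by (auto simp: M_def M_toric_def)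
    from key[OF box this(2) this(1)] show ?thesis by (simp add: d_def r_def q_def)
  qed
  have "\<delta> \<le> 0"
  proof (rule ccontr)
    assume "\<not> \<delta> \<le> 0"
    then have dpos: "\<delta> / 2 < \<delta>" "0 < \<delta> / 2" by auto
    have "eventually (\<lambda>i. \<delta> / 2 < d i) sequentially"
      using order_tendstoD(1)[OF delta_lim dpos(1)] by (simp add: d_def)
    then obtain N0 where N0: "\<And>i. i \<ge> N0 \<Longrightarrow> \<delta> / 2 < d i" by (auto simp: eventually_sequentially)
    obtain K where K: "r ^ K < \<delta> / 2" using real_arch_pow_inv[OF dpos(2) r1] by blast
    define K' where "K' = max K (Max (M ` {..<N0}))"
    have "\<exists>i. K' < M i"
    proof (rule ccontr)
      assume "\<not> (\<exists>i. K' < M i)"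
      then have "\<forall>x\<in>range M. x \<le> K'" by (auto simp: not_less)
      then have "bdd_above (range M)" unfolding bdd_above_def by blast
      then show False using M_unbdd unfolding M_def by simp
    qed
    then obtain i where i: "M i > K'" by blast
    have "i \<ge> N0"
    proof (rule ccontr)
      assume "\<not> N0 \<le> i"
      then have "M i \<le> Max (M ` {..<N0})" by (intro Max_ge) auto
      then show False using i by (simp add: K'_def)
    qed
    then have "\<delta> / 2 < d i" by (rule N0)
    also have "\<dots> \<le> r ^ M i" by (rule dM)
    also have "\<dots> \<le> r ^ K" using i r0 r1 by (intro power_decreasing) (auto simp: K'_def)
    finally show False using K by simp
  qed
  then have "\<delta> = 0" using delta_range by simp
  then show ?thesis using delta_lim by simp
qed
end
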